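(* Let $\alpha\in(0,\infty)$, $\beta\in(0,1]$, and let $Y$ be a non-negative random variable with $\mathbb{E}Y^2<\infty$ and $\mathrm{Var}\,Y\leq\mathbb{E}Y=:\mu$. Then $$\mathbb{E}\frac{1}{(\alpha+Y)^\beta}\leq\frac{\widetilde C(\alpha,\beta)}{(\alpha+\mu)^\beta},$$ where $\widetilde C(\alpha,\beta)=\sup_{x\in[0,\infty)}h(x)$ with $h(x)=\frac{(\alpha+x)^\beta}{1+x}\big(\frac{x}{(\alpha+1+x)^\beta}+\frac{1}{\alpha^\beta}\big)$. Moreover, for fixed $\alpha$ and $\beta$ the factor $\widetilde C(\alpha,\beta)$ cannot be replaced by a smaller constant (in the sense that the inequality with a smaller constant fails for some such $Y$). *)

theory Defs
  imports "HOL-Probability.Probability"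
begin

definition h_fun :: "real \<Rightarrow> real \<Rightarrow> real \<Rightarrow> real" where
  "h_fun \<alpha> \<beta> x = (\<alpha> + x) powr \<beta> / (1 + x) *
      (x / (\<alpha> + 1 + x) powr \<beta> + 1 / \<alpha> powr \<beta>)"

definition C_tilde :: "real \<Rightarrow> real \<Rightarrow> real" where
  "C_tilde \<alpha> \<beta> = (SUP x\<in>{0..}. h_fun \<alpha> \<beta> x)"

end

theory Submission
  imports Defs
begin


lemma sign_aux: "(a::real) = b * c \<Longrightarrow> b > 0 \<Longrightarrow> (a < 0 \<longleftrightarrow> c < 0) \<and> (a > 0 \<longleftrightarrow> c > 0) \<and> (a = 0 \<longleftrightarrow> c = 0)"
  by (auto simp: mult_less_0_iff zero_less_mult_iff)

lemma nonneg_aux: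
  fixes g g' g'' :: "real \<Rightarrow> real"
  assumes d1: "\<And>x. 0 \<le> x \<Longrightarrow> DERIV g x :> g' x"
    and d2: "\<And>x. 0 \<le> x \<Longrightarrow> DERIV g' x :> g'' x"
    and mono: "\<And>a b. 0 \<le> a \<Longrightarrow> a < b \<Longrightarrow> g'' a < g'' b"
    and t: "t > 0" and g0: "g 0 = 0" and gt: "g t = 0" and g't: "g' t = 0" and y: "y \<ge> 0"
  shows "g y \<ge> 0"
proof (rule ccontr)
  assume neg: "\<not> g y \<ge> 0"
  have MV: "\<exists>z. a < z \<and> z < b \<and> g b - g a = (b - a) * g' z" if "0 \<le> a" "a < b" for a b
    using MVT2[of a b g g'] d1 that by auto
  have MV': "\<exists>z. a < z \<and> z < b \<and> g' b - g' a = (b - a) * g'' z" if "0 \<le> a" "a < b" for a b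
    using MVT2[of a b g' g''] d2 that by auto
  consider "y > t" | "0 < y" "y < t" using neg g0 gt y by fastforce
  then show False
  proof cases
    case 1
    obtain z1 where z1: "t < z1" "z1 < y" "g y - g t = (y - t) * g' z1" using MV[of t y] 1 t by auto
    have "g' z1 < 0" using sign_aux[OF z1(3)] 1 neg gt by auto
    obtain z2 where z2: "t < z2" "z2 < z1" "g' z1 - g' t = (z1 - t) * g'' z2" using MV'[of t z1] z1 t by auto
    have n2: "g'' z2 < 0" using sign_aux[OF z2(3)] z2 \<open>g' z1 < 0\<close> g't by auto
    obtain z3 where z3: "0 < z3" "z3 < t" "g t - g 0 = (t - 0) * g' z3" using MV[of 0 t] t by auto
    have "g' z3 = 0" using sign_aux[OF z3(3)] t g0 gt by auto
    obtain z4 where z4: "z3 < z4" "z4 < t" "g' t - g' z3 = (t - z3) * g'' z4" using MV'[of z3 t] z3 by auto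
    have "g'' z4 = 0" using sign_aux[OF z4(3)] z4 \<open>g' z3 = 0\<close> g't by auto
    moreover have "g'' z4 < g'' z2" using mono[of z4 z2] z4 z3 z2 by auto
    ultimately show False using n2 by auto
  next
    case 2
    obtain z1 where z1: "0 < z1" "z1 < y" "g y - g 0 = (y - 0) * g' z1" using MV[of 0 y] 2 by auto
    have a1: "g' z1 < 0" using sign_aux[OF z1(3)] 2 neg g0 by auto
    obtain z2 where z2: "y < z2" "z2 < t" "g t - g y = (t - y) * g' z2" using MV[of y t] 2 by auto
    have a2: "g' z2 > 0" using sign_aux[OF z2(3)] 2 neg gt by auto
    obtain z3 where z3: "z2 < z3" "z3 < t" "g' t - g' z2 = (t - z2) * g'' z3" using MV'[of z2 t] z2 2 by auto
    have a3: "g'' z3 < 0" using sign_aux[OF z3(3)] z3 a2 g't by auto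
    obtain z4 where z4: "z1 < z4" "z4 < z2" "g' z2 - g' z1 = (z2 - z1) * g'' z4" using MV'[of z1 z2] z1 z2 by auto
    have a4: "g'' z4 > 0" using sign_aux[OF z4(3)] z4 a1 a2 by auto
    have "g'' z4 < g'' z3" using mono[of z4 z3] z4 z3 z1 by auto
    then show False using a3 a4 by auto
  qed
qed

lemma majorant:
  fixes \<alpha> \<beta> t c y :: real
  assumes a: "\<alpha> > 0" and b: "\<beta> > 0" and t: "t > 0" and y: "y \<ge> 0"
  defines "f \<equiv> \<lambda>y. (\<alpha> + y) powr (-\<beta>)"
  defines "f1 \<equiv> \<lambda>y. -\<beta> * (\<alpha> + y) powr (-\<beta> - 1)"
  defines "f2 \<equiv> \<lambda>y. \<beta> * (\<beta> + 1) * (\<alpha> + y) powr (-\<beta> - 2)"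
  assumes c: "c = (f 0 - f t + f1 t * t) / t^2"
  shows "f y \<le> f t + f1 t * (y - t) + c * (y - t)^2"
proof -
  define g where "g = (\<lambda>y. f t + f1 t * (y - t) + c * (y - t)^2 - f y)"
  define g' where "g' = (\<lambda>y. f1 t + 2 * c * (y - t) - f1 y)"
  define g'' where "g'' = (\<lambda>y. 2 * c - f2 y)"
  have d1: "DERIV g x :> g' x" if "0 \<le> x" for x
    unfolding g_def g'_def f_def f1_def using that a
    by (auto intro!: derivative_eq_intros simp: algebra_simps)
  have d2: "DERIV g' x :> g'' x" if "0 \<le> x" for x
    unfolding g'_def g''_def f2_def f1_def using that a
    by (auto intro!: derivative_eq_intros simp: algebra_simps)
  have mono: "g'' p < g'' q" if "0 \<le> p" "p < q" for p q
  proof -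
    have "(\<alpha> + q) powr (-\<beta> - 2) < (\<alpha> + p) powr (-\<beta> - 2)"
      by (rule powr_less_mono2_neg) (use that a b in auto)
    then show ?thesis unfolding g''_def f2_def using b by (simp add: mult_strict_left_mono)
  qed
  have "g y \<ge> 0"
    by (rule nonneg_aux[OF d1 d2 mono t]) (use t y in \<open>auto simp: g_def g'_def c power2_eq_square field_simps\<close>)
  then show ?thesis unfolding g_def by simp
qed



lemma h_bound:
  assumes a: "\<alpha> > 0" and b: "0 < \<beta>" "\<beta> \<le> 1" and x: "x \<ge> 0"
  shows "h_fun \<alpha> \<beta> x \<le> 1 + (1 + \<alpha>) / \<alpha> powr \<beta>"
proof -
  have p1: "(\<alpha> + x) powr \<beta> \<le> (\<alpha> + 1 + x) powr \<beta>"
    by (rule powr_mono2) (use a b x in auto)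
  have pos: "(\<alpha> + 1 + x) powr \<beta> > 0" using a x by simp
  have t1: "(\<alpha> + x) powr \<beta> / (1 + x) * (x / (\<alpha> + 1 + x) powr \<beta>) \<le> 1"
  proof -
    have "(\<alpha> + x) powr \<beta> / (1 + x) * (x / (\<alpha> + 1 + x) powr \<beta>)
        = ((\<alpha> + x) powr \<beta> / (\<alpha> + 1 + x) powr \<beta>) * (x / (1 + x))" by simp
    also have "\<dots> \<le> 1 * 1"
      by (rule mult_mono) (use p1 pos x in \<open>auto simp: divide_le_eq\<close>)
    finally show ?thesis by simp
  qed
  have p2: "(\<alpha> + x) powr \<beta> \<le> 1 + \<alpha> + x"
  proof (cases "\<alpha> + x \<ge> 1")
    case True
    then have "(\<alpha> + x) powr \<beta> \<le> (\<alpha> + x) powr 1" by (intro powr_mono) (use b in auto)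
    then show ?thesis using a x by simp
  next
    case False
    then have "(\<alpha> + x) powr \<beta> \<le> 1 powr \<beta>" by (intro powr_mono2) (use a b x in auto)
    then show ?thesis using a x by simp
  qed
  have apos: "\<alpha> powr \<beta> > 0" using a by simp
  have t2: "(\<alpha> + x) powr \<beta> / (1 + x) * (1 / \<alpha> powr \<beta>) \<le> (1 + \<alpha>) / \<alpha> powr \<beta>"
  proof -
    have "(\<alpha> + x) powr \<beta> / (1 + x) \<le> 1 + \<alpha>"
    proof -
      have "0 \<le> \<alpha> * x" using a x by simp
      moreover have "(1+\<alpha>)*(1+x) = 1+\<alpha>+x+\<alpha>*x" by (simp add: algebra_simps)
      ultimately have "(\<alpha> + x) powr \<beta> \<le> (1+\<alpha>)*(1+x)" using p2 by linarith
      then show ?thesis using x by (simp add: divide_le_eq)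
    qed
    then have "(\<alpha> + x) powr \<beta> / (1 + x) / \<alpha> powr \<beta> \<le> (1 + \<alpha>) / \<alpha> powr \<beta>"
      using apos by (intro divide_right_mono) auto
    then show ?thesis by simp
  qed
  show ?thesis unfolding h_fun_def using t1 t2 by (simp add: distrib_left)
qed

lemma bdd_h: "\<alpha> > 0 \<Longrightarrow> 0 < \<beta> \<Longrightarrow> \<beta> \<le> 1 \<Longrightarrow> bdd_above (h_fun \<alpha> \<beta> ` {0..})"
  using h_bound by (intro bdd_aboveI2[where M = "1 + (1 + \<alpha>) / \<alpha> powr \<beta>"]) auto



lemma alg_aux:
  fixes t c F0 Ft D :: real
  assumes "t \<noteq> 0" "c = (F0 - Ft + D*t)/t^2"
  shows "(Ft - D*t + c*t^2) + (D - 2*c*t)*(t-1) + c*((t-1)+(t-1)^2) = (F0 + (t-1)*Ft)/t"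
proof -
  have ct: "c*t^2 = F0 - Ft + D*t" using assms by simp
  have "((Ft - D*t + c*t^2) + (D - 2*c*t)*(t-1) + c*((t-1)+(t-1)^2)) * t = (Ft - D)*t + c*t^2"
    by (simp add: algebra_simps power2_eq_square)
  also have "\<dots> = F0 + (t-1)*Ft" using ct by (simp add: algebra_simps)
  finally show ?thesis using assms(1) by (simp add: field_simps)
qed

lemma part1:
  fixes M :: "'a measure" and Y :: "'a \<Rightarrow> real" and \<alpha> \<beta> :: real
  assumes a: "\<alpha> > 0" and b: "0 < \<beta>" and b1: "\<beta> \<le> 1" and P: "prob_space M"
    and meas: "Y \<in> borel_measurable M" and nn: "\<forall>\<omega>\<in>space M. Y \<omega> \<ge> 0"
    and sq: "integrable M (\<lambda>\<omega>. (Y \<omega>)^2)"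
    and var: "prob_space.variance M Y \<le> prob_space.expectation M Y"
  shows "prob_space.expectation M (\<lambda>\<omega>. 1 / (\<alpha> + Y \<omega>) powr \<beta>)
              \<le> C_tilde \<alpha> \<beta> / (\<alpha> + prob_space.expectation M Y) powr \<beta>"
proof -
  interpret prob_space M by (rule P)
  have intY: "integrable M Y" using square_integrable_imp_integrable[OF meas sq] .
  define \<mu> where "\<mu> = expectation Y"
  have mu0: "\<mu> \<ge> 0" unfolding \<mu>_def using nn by (simp add: Bochner_Integration.integral_nonneg)
  have EY2: "expectation (\<lambda>\<omega>. (Y \<omega>)^2) \<le> \<mu> + \<mu>^2"
    using variance_eq[OF intY sq] var unfolding \<mu>_def by simp
  define t where "t = 1 + \<mu>"
  have t: "t > 0" using mu0 t_def by simp
  define f where "f \<equiv> \<lambda>y. (\<alpha> + y) powr (-\<beta>)"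
  define f1 where "f1 \<equiv> \<lambda>y. -\<beta> * (\<alpha> + y) powr (-\<beta> - 1)"
  define c where "c = (f 0 - f t + f1 t * t) / t^2"
  have c0: "c \<ge> 0"
  proof -
    have dd: "DERIV f x :> f1 x" if "0 \<le> x" for x
      unfolding f_def f1_def using that a
      by (auto intro!: derivative_eq_intros simp: algebra_simps)
    obtain z where z: "0 < z" "z < t" "f t - f 0 = (t - 0) * f1 z"
      using MVT2[of 0 t f f1] t dd by auto
    have "(\<alpha> + t) powr (-\<beta> - 1) < (\<alpha> + z) powr (-\<beta> - 1)"
      by (rule powr_less_mono2_neg) (use z a b in auto)
    then have "f1 z \<le> f1 t" unfolding f1_def using b by simp
    then have "f t - f 0 \<le> t * f1 t" using z t by (simp add: mult_left_mono)
    then show ?thesis unfolding c_def by (intro divide_nonneg_nonneg) (auto simp: algebra_simps)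
  qed
  define A where "A = f t - f1 t * t + c * t^2"
  define B where "B = f1 t - 2 * c * t"
  have maj: "1 / (\<alpha> + Y \<omega>) powr \<beta> \<le> A + B * Y \<omega> + c * (Y \<omega>)^2" if "\<omega> \<in> space M" for \<omega>
  proof -
    have "f (Y \<omega>) \<le> f t + f1 t * (Y \<omega> - t) + c * (Y \<omega> - t)^2"
      using majorant[OF a b t, of "Y \<omega>" c] nn that unfolding f_def f1_def c_def by auto
    then show ?thesis unfolding f_def A_def B_def by (simp add: powr_minus_divide power2_eq_square algebra_simps)
  qed
  have intf: "integrable M (\<lambda>\<omega>. 1 / (\<alpha> + Y \<omega>) powr \<beta>)"
  proof (rule integrable_const_bound[where B = "1 / \<alpha> powr \<beta>"])
    show "AE x in M. norm (1 / (\<alpha> + Y x) powr \<beta>) \<le> 1 / \<alpha> powr \<beta>"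
    proof (rule AE_I2)
      fix x assume "x \<in> space M"
      then have "\<alpha> powr \<beta> \<le> (\<alpha> + Y x) powr \<beta>" using nn a b by (intro powr_mono2) auto
      then show "norm (1 / (\<alpha> + Y x) powr \<beta>) \<le> 1 / \<alpha> powr \<beta>"
        using a by (simp add: frac_le)
    qed
    show "(\<lambda>\<omega>. 1 / (\<alpha> + Y \<omega>) powr \<beta>) \<in> borel_measurable M" using meas by measurable
  qed
  have "expectation (\<lambda>\<omega>. 1 / (\<alpha> + Y \<omega>) powr \<beta>) \<le> expectation (\<lambda>\<omega>. A + B * Y \<omega> + c * (Y \<omega>)^2)"
    by (rule integral_mono[OF intf]) (use intY sq maj in auto)
  also have "\<dots> = A + B * \<mu> + c * expectation (\<lambda>\<omega>. (Y \<omega>)^2)"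
    using intY sq unfolding \<mu>_def by (simp add: prob_space)
  also have "\<dots> \<le> A + B * \<mu> + c * (\<mu> + \<mu>^2)"
    using EY2 c0 by (simp add: mult_left_mono)
  also have "\<dots> = (f 0 + \<mu> * f t) / t"
    using alg_aux[of t c "f 0" "f t" "f1 t"] t c_def unfolding A_def B_def t_def by simp
  also have "\<dots> = h_fun \<alpha> \<beta> \<mu> / (\<alpha> + \<mu>) powr \<beta>"
  proof -
    have hp: "(\<alpha>+\<mu>) powr \<beta> > 0" using a mu0 by simp
    have "h_fun \<alpha> \<beta> \<mu> = (\<alpha>+\<mu>) powr \<beta> * ((f 0 + \<mu> * f t)/t)"
      unfolding h_fun_def f_def t_def by (simp add: powr_minus_divide add_ac)
    then show ?thesis using hp by simp
  qed
  also have "\<dots> \<le> C_tilde \<alpha> \<beta> / (\<alpha> + \<mu>) powr \<beta>"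
    unfolding C_tilde_def using mu0 a
    by (intro divide_right_mono cSUP_upper bdd_h a b b1) auto
  finally show ?thesis unfolding \<mu>_def .
qed



lemma part2:
  fixes \<alpha> \<beta> :: real
  assumes a: "\<alpha> > 0" and b: "0 < \<beta>" and b1: "\<beta> \<le> 1" and cl: "c < C_tilde \<alpha> \<beta>"
  shows "\<exists>(M :: real measure) (Y :: real \<Rightarrow> real).
            prob_space M \<and> Y \<in> borel_measurable M \<and>
            (\<forall>\<omega>\<in>space M. Y \<omega> \<ge> 0) \<and>
            integrable M (\<lambda>\<omega>. (Y \<omega>)^2) \<and>
            prob_space.variance M Y \<le> prob_space.expectation M Y \<and>
            \<not> (prob_space.expectation M (\<lambda>\<omega>. 1 / (\<alpha> + Y \<omega>) powr \<beta>)
                 \<le> c / (\<alpha> + prob_space.expectation M Y) powr \<beta>)"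
proof -
  obtain x where x: "x \<ge> 0" "c < h_fun \<alpha> \<beta> x"
    using cl less_cSUP_iff[of "{0..}" "h_fun \<alpha> \<beta>" c] bdd_h[OF a b b1] unfolding C_tilde_def by auto
  define q where "q = x / (1 + x)"
  have q: "0 \<le> q" "q \<le> 1" using x unfolding q_def by auto
  define p where "p = map_pmf (\<lambda>b. if b then 1 + x else 0) (bernoulli_pmf q)"
  define M where "M = measure_pmf p"
  define Y where "Y = (\<lambda>\<omega>::real. \<bar>\<omega>\<bar>)"
  interpret prob_space M unfolding M_def by (rule prob_space_measure_pmf)
  have fin: "finite (set_pmf p)" unfolding p_def by simp
  have int: "integrable M F" for F :: "real \<Rightarrow> real"
    unfolding M_def by (rule integrable_measure_pmf_finite[OF fin])
  have EY: "expectation Y = x"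
    unfolding M_def p_def Y_def using q x by (simp add: q_def field_simps)
  have VY: "variance Y = x"
  proof -
    have d: "1 + (x*x + x*2) > 0" using x by (simp add: add_pos_nonneg)
    show ?thesis
      unfolding EY unfolding M_def p_def Y_def using q x d
      by (simp add: q_def field_simps power2_eq_square)
  qed
  have Ef: "expectation (\<lambda>\<omega>. 1 / (\<alpha> + Y \<omega>) powr \<beta>) * (\<alpha> + x) powr \<beta> = h_fun \<alpha> \<beta> x"
  proof -
    have x1: "1 + x \<noteq> 0" using x by simp
    have "expectation (\<lambda>\<omega>. 1 / (\<alpha> + Y \<omega>) powr \<beta>) = (x / (\<alpha> + 1 + x) powr \<beta> + 1 / \<alpha> powr \<beta>) / (1 + x)"
    proof -
      have A: "\<alpha> powr \<beta> > 0" using a by simp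
      have gen: "1/Z - x/((1+x)*Z) = 1/(Z*(1+x))" if "Z > 0" for Z :: real
      proof -
        have "Z + Z*x > 0" using that x by (simp add: add_pos_nonneg)
        then show ?thesis using that x by (simp add: field_simps)
      qed
      show ?thesis
        unfolding M_def p_def Y_def using q x x1 a gen[OF A] by (simp add: q_def add_ac diff_divide_distrib add_divide_distrib)
    qed
    then show ?thesis unfolding h_fun_def by simp
  qed
  have hp: "(\<alpha> + x) powr \<beta> > 0" using a x by simp
  have "\<not> (expectation (\<lambda>\<omega>. 1 / (\<alpha> + Y \<omega>) powr \<beta>) \<le> c / (\<alpha> + expectation Y) powr \<beta>)"
    unfolding EY using Ef x(2) hp by (simp add: le_divide_eq)
  moreover have "Y \<in> borel_measurable M" unfolding M_def by simp
  moreover have "\<forall>\<omega>\<in>space M. Y \<omega> \<ge> 0" unfolding Y_def by simp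
  ultimately show ?thesis using int VY EY prob_space_axioms by (intro exI[of _ M] exI[of _ Y]) auto
qed

theorem mainTheorem9:
  fixes \<alpha> \<beta> :: real
  assumes "\<alpha> > 0" and "0 < \<beta>" and "\<beta> \<le> 1"
  shows "(\<forall>(M :: 'a measure) (Y :: 'a \<Rightarrow> real).
            prob_space M \<longrightarrow> Y \<in> borel_measurable M \<longrightarrow>
            (\<forall>\<omega>\<in>space M. Y \<omega> \<ge> 0) \<longrightarrow>
            integrable M (\<lambda>\<omega>. (Y \<omega>)^2) \<longrightarrow>
            prob_space.variance M Y \<le> prob_space.expectation M Y \<longrightarrow>
            prob_space.expectation M (\<lambda>\<omega>. 1 / (\<alpha> + Y \<omega>) powr \<beta>)
              \<le> C_tilde \<alpha> \<beta> / (\<alpha> + prob_space.expectation M Y) powr \<beta>)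
       \<and> (\<forall>c < C_tilde \<alpha> \<beta>. \<exists>(M :: real measure) (Y :: real \<Rightarrow> real).
            prob_space M \<and> Y \<in> borel_measurable M \<and>
            (\<forall>\<omega>\<in>space M. Y \<omega> \<ge> 0) \<and>
            integrable M (\<lambda>\<omega>. (Y \<omega>)^2) \<and>
            prob_space.variance M Y \<le> prob_space.expectation M Y \<and>
            \<not> (prob_space.expectation M (\<lambda>\<omega>. 1 / (\<alpha> + Y \<omega>) powr \<beta>)
                 \<le> c / (\<alpha> + prob_space.expectation M Y) powr \<beta>))"
    using part1[OF assms] part2[OF assms] by blast

end
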